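(* Let $X$ be a real Banach space with $\dim X\ge 2$. (i) If $S_P(X)=\tfrac12$, then $X$ is not uniformly convex. (ii) If $S_P(X)=\tfrac12$ and $X$ is finite-dimensional, then $X$ is not strictly convex.
   Context: For a real Banach space $X$ with unit sphere $S_X$, the P-angle constant is $S_P(X)=\sup\left\{\frac{\|x+y\|^2+\|x-y\|^2-4}{2\|x+y\|\,\|x-y\|}: x,y\in S_X,\ x\neq \pm y\right\}$. $X$ is uniformly convex if for every $\varepsilon\in(0,2]$ there is $\delta>0$ such that $x,y\in S_X$ and $\|x-y\|\ge\varepsilon$ imply $\frac{\|x+y\|}{2}\le 1-\delta$. $X$ is strictly convex if $x,y\in S_X$, $x\ne y$ imply $\|x+y\|<2$. *)

theory Defs
  imports "HOL-Analysis.Analysis"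
begin

definition unit_sphere :: "'a::real_normed_vector set" where
  "unit_sphere = {x. norm x = 1}"

definition P_angle_const :: "'a::real_normed_vector itself \<Rightarrow> real" where
  "P_angle_const _ = Sup {((norm (x + y))\<^sup>2 + (norm (x - y))\<^sup>2 - 4) / (2 * norm (x + y) * norm (x - y)) | x y :: 'a.
      x \<in> unit_sphere \<and> y \<in> unit_sphere \<and> x \<noteq> y \<and> x \<noteq> - y}"

definition uniformly_convex_space :: "'a::real_normed_vector itself \<Rightarrow> bool" where
  "uniformly_convex_space _ \<longleftrightarrow>
     (\<forall>\<epsilon>. 0 < \<epsilon> \<and> \<epsilon> \<le> 2 \<longrightarrow> (\<exists>\<delta>>0. \<forall>x y :: 'a. x \<in> unit_sphere \<and> y \<in> unit_sphere \<and> norm (x - y) \<ge> \<epsilon>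
        \<longrightarrow> norm (x + y) / 2 \<le> 1 - \<delta>))"

definition strictly_convex_space :: "'a::real_normed_vector itself \<Rightarrow> bool" where
  "strictly_convex_space _ \<longleftrightarrow>
     (\<forall>x y :: 'a. x \<in> unit_sphere \<and> y \<in> unit_sphere \<and> x \<noteq> y \<longrightarrow> norm (x + y) < 2)"

definition dim_ge_2 :: "'a::real_vector itself \<Rightarrow> bool" where
  "dim_ge_2 _ \<longleftrightarrow> (\<exists>u v :: 'a. u \<noteq> v \<and> independent {u, v})"

definition finite_dim_space :: "'a::real_vector itself \<Rightarrow> bool" where
  "finite_dim_space _ \<longleftrightarrow> (\<exists>B :: 'a set. finite B \<and> span B = UNIV)"

end

theory Submission imports Defs begin
lemma key_le:
  fixes a b :: real
  assumes "0 < a" "a \<le> 2" "0 < b" "b \<le> 2"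
  shows "(a\<^sup>2 + b\<^sup>2 - 4) / (2 * a * b) \<le> 1/2"
proof -
  have "a\<^sup>2 + b\<^sup>2 - 4 \<le> a * b"
  proof -
    have "a\<^sup>2 - a*b + b\<^sup>2 \<le> 4"
    proof (cases "a \<le> b")
      case True
      have "a\<^sup>2 - a*b = a*(a-b)" by (simp add: power2_eq_square algebra_simps)
      also have "\<dots> \<le> 0" using True assms by (simp add: mult_nonneg_nonpos)
      finally show ?thesis using assms power_mono[of b 2 2] by simp
    next
      case False
      have "b\<^sup>2 - a*b = b*(b-a)" by (simp add: power2_eq_square algebra_simps)
      also have "\<dots> \<le> 0" using False assms by (simp add: mult_nonneg_nonpos)
      finally show ?thesis using assms power_mono[of a 2 2] by simp
    qed
    then show ?thesis by simp
  qed
  then show ?thesis using assms by (simp add: divide_simps)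
qed

lemma key_gt:
  fixes a b \<eta> :: real
  assumes "0 < a" "a \<le> 2" "0 < b" "b \<le> 2" "0 \<le> \<eta>"
    and "(a\<^sup>2 + b\<^sup>2 - 4) / (2 * a * b) > 1/2 - \<eta>"
  shows "a\<^sup>2 \<ge> 4 - 16*\<eta> \<and> b\<^sup>2 \<ge> 4 - 16*\<eta>"
proof -
  have ab: "a*b > 0" using assms by simp
  have h: "a\<^sup>2 + b\<^sup>2 - 4 > (1 - 2*\<eta>) * (a*b)"
  proof -
    have "(1/2 - \<eta>) * (2*a*b) < a\<^sup>2 + b\<^sup>2 - 4"
      using assms(6) ab by (simp add: less_divide_eq mult.assoc)
    then show ?thesis by (simp add: algebra_simps)
  qed
  have a4: "a\<^sup>2 \<le> 4" and b4: "b\<^sup>2 \<le> 4" using assms power_mono[of a 2 2] power_mono[of b 2 2] by auto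
  have "b\<^sup>2 > (1 - 2*\<eta>) * a * b" using h a4 by (simp add: algebra_simps)
  then have bge: "b > (1 - 2*\<eta>) * a" using assms by (simp add: power2_eq_square mult.commute mult.left_commute)
  have "a\<^sup>2 > (1 - 2*\<eta>) * a * b" using h b4 by (simp add: algebra_simps)
  then have age: "a > (1 - 2*\<eta>) * b" using assms by (simp add: power2_eq_square mult.commute mult.left_commute)
  have "b * (b - a) \<le> b * (2*\<eta>*b)" using age assms by (intro mult_left_mono) (auto simp: algebra_simps)
  moreover have "a * (a - b) \<le> a * (2*\<eta>*a)" using bge assms by (intro mult_left_mono) (auto simp: algebra_simps)
  moreover have "\<eta>*(a*b) \<le> \<eta>*4" using assms by (intro mult_left_mono) (auto intro: mult_mono[of a 2 b 2, simplified])
  moreover have "\<eta>*(a*a) \<le> \<eta>*4" "\<eta>*(b*b) \<le> \<eta>*4" using a4 b4 assms by (auto simp: power2_eq_square intro: mult_left_mono)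
  ultimately show ?thesis using h by (auto simp: power2_eq_square algebra_simps)
qed
lemma fd_subseq:
  fixes B :: "'a::real_normed_vector set"
  assumes "finite B"
  shows "\<And>s::nat\<Rightarrow>'a. (\<forall>n. s n \<in> span B) \<Longrightarrow> bounded (range s) \<Longrightarrow>
     \<exists>(r::nat\<Rightarrow>nat) l. strict_mono r \<and> l \<in> span B \<and> (s \<circ> r) \<longlonglongrightarrow> l"
  using assms
proof (induction B rule: finite_induct)
  case empty
  then have "s = (\<lambda>n. 0)" by auto
  then have "strict_mono id \<and> (0::'a) \<in> span {} \<and> ((s::nat\<Rightarrow>'a) \<circ> id) \<longlonglongrightarrow> 0"
    by (auto simp: strict_mono_def span_zero)
  then show ?case by blast
next
  case (insert b B)
  have closedB: "z \<in> span B" if g: "\<forall>n. g n \<in> span B" "g \<longlonglongrightarrow> z" for z g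
  proof -
    have "bounded (range g)" using g(2) by (rule convergent_imp_bounded)
    then obtain r l where r: "strict_mono r" "l \<in> span B" "(g \<circ> r) \<longlonglongrightarrow> l"
      using insert.IH g(1) by blast
    have "(g \<circ> r) \<longlonglongrightarrow> z" using LIMSEQ_subseq_LIMSEQ[OF g(2) r(1)] .
    then have "z = l" using r(3) LIMSEQ_unique by blast
    then show "z \<in> span B" using r(2) by simp
  qed
  show ?case
  proof (cases "b \<in> span B")
    case True
    then have "span (insert b B) = span B" by (simp add: span_redundant)
    then show ?thesis using insert.IH insert.prems by auto
  next
    case False
    have "\<forall>n. \<exists>k. s n - k *\<^sub>R b \<in> span B"
      using insert.prems(1) unfolding span_insert by blast
    then obtain c where c: "\<And>n. s n - c n *\<^sub>R b \<in> span B" by metis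
    define t where "t n = s n - c n *\<^sub>R b" for n
    have tB: "t n \<in> span B" for n using c t_def by simp
    obtain M where M: "M > 0" "\<And>n. norm (s n) \<le> M" using insert.prems(2) by (auto simp: bounded_pos)
    define e where "e n = 1 / (1 + \<bar>c n\<bar>)" for n
    have e_pos: "e n > 0" "e n \<le> 1" for n unfolding e_def by auto
    have ec: "\<bar>e n * c n\<bar> = 1 - e n" for n
      unfolding e_def by (simp add: field_simps abs_mult)
    have "bounded (range (\<lambda>n. (e n, e n * c n)))"
      unfolding bounded_iff
    proof (intro exI[of _ 2] ballI)
      fix z assume "z \<in> range (\<lambda>n. (e n, e n * c n))"
      then obtain n where z: "z = (e n, e n * c n)" by auto
      have "norm z \<le> norm (e n) + norm (e n * c n)" unfolding z by (rule norm_Pair_le)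
      also have "\<dots> \<le> 2" using ec[of n] e_pos[of n] by simp
      finally show "norm z \<le> 2" .
    qed
    then obtain L r where r: "strict_mono r" "((\<lambda>n. (e n, e n * c n)) \<circ> r) \<longlonglongrightarrow> L"
      using bounded_imp_convergent_subsequence by blast
    obtain e0 g where L: "L = (e0, g)" by (cases L)
    have er: "(\<lambda>n. e (r n)) \<longlonglongrightarrow> e0"
      using tendsto_fst[OF r(2)] by (simp add: L o_def)
    have gr: "(\<lambda>n. e (r n) * c (r n)) \<longlonglongrightarrow> g"
      using tendsto_snd[OF r(2)] by (simp add: L o_def)
    have e0: "e0 \<ge> 0" using er e_pos by (intro LIMSEQ_le_const[OF er]) (auto intro: less_imp_le)
    show ?thesis
    proof (cases "e0 = 0")
      case True
      have "(\<lambda>n. e (r n) *\<^sub>R s (r n)) \<longlonglongrightarrow> 0"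
      proof (rule Lim_null_comparison)
        show "\<forall>\<^sub>F n in sequentially. norm (e (r n) *\<^sub>R s (r n)) \<le> e (r n) * M"
        proof (rule always_eventually, rule allI)
          fix n
          have "norm (e (r n) *\<^sub>R s (r n)) = e (r n) * norm (s (r n))"
            using e_pos[of "r n"] by simp
          also have "\<dots> \<le> e (r n) * M" using e_pos[of "r n"] M(2)[of "r n"] by (intro mult_left_mono) auto
          finally show "norm (e (r n) *\<^sub>R s (r n)) \<le> e (r n) * M" .
        qed
        show "(\<lambda>n. e (r n) * M) \<longlonglongrightarrow> 0"
          using tendsto_mult[OF er tendsto_const[of M]] True by simp
      qed
      then have "(\<lambda>n. e (r n) *\<^sub>R s (r n) - (e (r n) * c (r n)) *\<^sub>R b) \<longlonglongrightarrow> 0 - g *\<^sub>R b"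
        by (intro tendsto_diff tendsto_scaleR gr tendsto_const)
      moreover have "e (r n) *\<^sub>R s (r n) - (e (r n) * c (r n)) *\<^sub>R b = e (r n) *\<^sub>R t (r n)" for n
        unfolding t_def by (simp add: algebra_simps)
      ultimately have "(\<lambda>n. e (r n) *\<^sub>R t (r n)) \<longlonglongrightarrow> - g *\<^sub>R b" by simp
      then have gb: "- g *\<^sub>R b \<in> span B"
        using closedB[of "\<lambda>n. e (r n) *\<^sub>R t (r n)"] tB by (simp add: span_mul)
      have "(\<lambda>n. \<bar>e (r n) * c (r n)\<bar>) \<longlonglongrightarrow> \<bar>g\<bar>" by (intro tendsto_rabs gr)
      moreover have "(\<lambda>n. \<bar>e (r n) * c (r n)\<bar>) \<longlonglongrightarrow> 1 - 0"
        unfolding ec using True by (intro tendsto_diff tendsto_const) (use er in simp)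
      ultimately have "\<bar>g\<bar> = 1" using LIMSEQ_unique by fastforce
      then have "g \<noteq> 0" by auto
      then have "b = (- 1 / g) *\<^sub>R (- g *\<^sub>R b)" by simp
      then have "b \<in> span B" using gb by (metis span_mul)
      then show ?thesis using False by simp
    next
      case False
      then have e0p: "e0 > 0" using e0 by simp
      have "(\<lambda>n. (e (r n) * c (r n)) / e (r n)) \<longlonglongrightarrow> g / e0"
        by (intro tendsto_divide gr er) (use False in simp)
      moreover have "(e (r n) * c (r n)) / e (r n) = c (r n)" for n using e_pos[of "r n"] by simp
      ultimately have cr: "(\<lambda>n. c (r n)) \<longlonglongrightarrow> g / e0" by simp
      then have "bounded (range (\<lambda>n. c (r n)))" by (rule convergent_imp_bounded)
      then obtain K where K: "\<And>n. norm (c (r n)) \<le> K" by (auto simp: bounded_iff)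
      have "bounded (range (\<lambda>n. t (r n)))"
        unfolding bounded_iff
      proof (intro exI[of _ "M + K * norm b"] ballI)
        fix z assume "z \<in> range (\<lambda>n. t (r n))"
        then obtain n where z: "z = t (r n)" by auto
        have "norm z \<le> norm (s (r n)) + norm (c (r n) *\<^sub>R b)" unfolding z t_def by (rule norm_triangle_ineq4)
        also have "\<dots> \<le> M + K * norm b" using M(2)[of "r n"] K[of n]
          by (intro add_mono) (auto intro: mult_right_mono)
        finally show "norm z \<le> M + K * norm b" .
      qed
      then obtain r2 w where r2: "strict_mono r2" "w \<in> span B" "((\<lambda>n. t (r n)) \<circ> r2) \<longlonglongrightarrow> w"
        using insert.IH[of "\<lambda>n. t (r n)"] tB by blast
      have cr2: "(\<lambda>n. c (r (r2 n))) \<longlonglongrightarrow> g / e0"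
        using LIMSEQ_subseq_LIMSEQ[OF cr r2(1)] by (simp add: o_def)
      have "(\<lambda>n. t (r (r2 n)) + c (r (r2 n)) *\<^sub>R b) \<longlonglongrightarrow> w + (g / e0) *\<^sub>R b"
        using r2(3) by (intro tendsto_add tendsto_scaleR cr2 tendsto_const) (simp add: o_def)
      moreover have "t (r (r2 n)) + c (r (r2 n)) *\<^sub>R b = s (r (r2 n))" for n by (simp add: t_def)
      ultimately have "(s \<circ> (r \<circ> r2)) \<longlonglongrightarrow> w + (g / e0) *\<^sub>R b" by (simp add: o_def)
      moreover have "w + (g / e0) *\<^sub>R b \<in> span (insert b B)"
        unfolding span_insert using r2(2) by (intro CollectI exI[of _ "g / e0"]) simp
      moreover have "strict_mono (r \<circ> r2)" using r(1) r2(1) by (rule strict_mono_o)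
      ultimately show ?thesis by blast
    qed
  qed
qed
theorem proposition5p6:
  assumes "dim_ge_2 TYPE('a::banach)"
    and "P_angle_const TYPE('a) = 1/2"
  shows "\<not> uniformly_convex_space TYPE('a) \<and>
         (finite_dim_space TYPE('a) \<longrightarrow> \<not> strictly_convex_space TYPE('a))"
proof -
  define F where "F x y = ((norm (x + y))\<^sup>2 + (norm (x - y))\<^sup>2 - 4) / (2 * norm (x + y) * norm (x - y))" for x y :: 'a
  define S where "S = {F x y | x y. x \<in> unit_sphere \<and> y \<in> unit_sphere \<and> x \<noteq> y \<and> x \<noteq> - y}"
  have Sup: "Sup S = 1/2" using assms(2) by (simp add: P_angle_const_def S_def F_def)
  have ab: "0 < norm (x + y) \<and> norm (x + y) \<le> 2 \<and> 0 < norm (x - y) \<and> norm (x - y) \<le> 2"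
    if "x \<in> unit_sphere" "y \<in> unit_sphere" "x \<noteq> y" "x \<noteq> - y" for x y :: 'a
  proof -
    have n: "norm x = 1" "norm y = 1" using that by (auto simp: unit_sphere_def)
    have "x + y \<noteq> 0" using that(4) by (metis add.commute neg_eq_iff_add_eq_0)
    moreover have "x - y \<noteq> 0" using that(3) by simp
    moreover have "norm (x + y) \<le> 2" using norm_triangle_ineq[of x y] n by simp
    moreover have "norm (x - y) \<le> 2" using norm_triangle_ineq4[of x y] n by simp
    ultimately show ?thesis by simp
  qed
  have bdd: "bdd_above S"
  proof (rule bdd_aboveI[of _ "1/2"])
    fix z assume "z \<in> S"
    then obtain x y where xy: "x \<in> unit_sphere" "y \<in> unit_sphere" "x \<noteq> y" "x \<noteq> - y" "z = F x y"
      unfolding S_def by blast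
    show "z \<le> 1/2" using ab[OF xy(1-4)] key_le[of "norm (x+y)" "norm (x-y)"] unfolding xy(5) F_def
      by blast
  qed
  have ne: "S \<noteq> {}"
  proof -
    obtain u v :: 'a where uv: "u \<noteq> v" "independent {u, v}"
      using assms(1) by (auto simp: dim_ge_2_def)
    have u: "u \<notin> span {v}" and iv: "independent {v}"
      using uv by (auto simp: independent_insert)
    have v0: "v \<noteq> 0" using iv dependent_zero by blast
    have u0: "u \<noteq> 0" using u span_zero by blast
    define x where "x = u /\<^sub>R norm u"
    define y where "y = v /\<^sub>R norm v"
    have xs: "x \<in> unit_sphere" "y \<in> unit_sphere" using u0 v0 by (auto simp: x_def y_def unit_sphere_def)
    have ux: "u = norm u *\<^sub>R x" using u0 by (simp add: x_def)
    have vy: "v = norm v *\<^sub>R y" using v0 by (simp add: y_def)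
    have "x \<noteq> y"
    proof
      assume "x = y"
      then have "u = norm u *\<^sub>R ((v /\<^sub>R norm v))" using ux by (simp add: y_def)
      then have "u = (norm u / norm v) *\<^sub>R v" by (simp add: divide_inverse)
      then have "u \<in> span {v}" by (metis span_base span_mul insertI1)
      then show False using u by simp
    qed
    moreover have "x \<noteq> - y"
    proof
      assume "x = - y"
      then have "u = norm u *\<^sub>R (- (v /\<^sub>R norm v))" using ux by (simp add: y_def)
      then have "u = (- norm u / norm v) *\<^sub>R v" by (simp add: divide_inverse)
      then have "u \<in> span {v}" by (metis span_base span_mul insertI1)
      then show False using u by simp
    qed
    ultimately show ?thesis using xs unfolding S_def by blast
  qed
  have near: "\<exists>x y::'a. x \<in> unit_sphere \<and> y \<in> unit_sphere \<and> x \<noteq> y \<and> x \<noteq> - y \<and>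
      (norm (x + y))\<^sup>2 \<ge> 4 - 16*\<eta> \<and> (norm (x - y))\<^sup>2 \<ge> 4 - 16*\<eta>" if "\<eta> > 0" for \<eta>
  proof -
    have "1/2 - \<eta> < Sup S" using Sup that by simp
    then obtain z where "z \<in> S" "1/2 - \<eta> < z" using less_cSup_iff[OF ne bdd] by blast
    then obtain x y where xy: "x \<in> unit_sphere" "y \<in> unit_sphere" "x \<noteq> y" "x \<noteq> - y" "1/2 - \<eta> < F x y"
      unfolding S_def by blast
    have "(norm (x + y))\<^sup>2 \<ge> 4 - 16*\<eta> \<and> (norm (x - y))\<^sup>2 \<ge> 4 - 16*\<eta>"
      using key_gt[of "norm (x+y)" "norm (x-y)" \<eta>] ab[OF xy(1-4)] that xy(5)
      unfolding F_def by simp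
    then show ?thesis using xy by blast
  qed
  show ?thesis
  proof
    show "\<not> uniformly_convex_space TYPE('a)"
    proof
      assume "uniformly_convex_space TYPE('a)"
      then obtain \<delta> where d: "\<delta> > 0" "\<And>x y::'a. x \<in> unit_sphere \<Longrightarrow> y \<in> unit_sphere \<Longrightarrow> norm (x - y) \<ge> 1
          \<Longrightarrow> norm (x + y) / 2 \<le> 1 - \<delta>"
        unfolding uniformly_convex_space_def by (metis order.refl one_le_numeral zero_less_one)
      define d where "d = min \<delta> (1/2)"
      have d0: "0 < d" "d \<le> 1/2" "d \<le> \<delta>" using d(1) by (auto simp: d_def)
      obtain x y :: 'a where xy: "x \<in> unit_sphere" "y \<in> unit_sphere" "x \<noteq> y" "x \<noteq> - y"
        "(norm (x + y))\<^sup>2 \<ge> 4 - 16*(d/4)" "(norm (x - y))\<^sup>2 \<ge> 4 - 16*(d/4)"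
        using near[of "d/4"] d0 by auto
      have "(norm (x - y))\<^sup>2 \<ge> 1\<^sup>2" using xy(6) d0 by simp
      then have "norm (x - y) \<ge> 1" using abs_le_square_iff[of 1 "norm (x-y)"] by simp
      then have "norm (x + y) / 2 \<le> 1 - \<delta>" using d(2) xy by blast
      then have a: "norm (x + y) \<le> 2 - 2*d" using d0 by simp
      have "(norm (x + y))\<^sup>2 \<le> (2 - 2*d)\<^sup>2" using a by (intro power_mono) auto
      also have "\<dots> = 4 - 8*d + 4*d*d" by (simp add: power2_eq_square algebra_simps)
      also have "\<dots> < 4 - 4*d" using d0 by (simp add: mult_strict_left_mono)
      finally show False using xy(5) by simp
    qed
  next
    show "finite_dim_space TYPE('a) \<longrightarrow> \<not> strictly_convex_space TYPE('a)"
    proof (intro impI notI)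
      assume "finite_dim_space TYPE('a)" and sc: "strictly_convex_space TYPE('a)"
      then obtain B :: "'a set" where B: "finite B" "span B = UNIV" by (auto simp: finite_dim_space_def)
      define \<eta> where "\<eta> n = inverse (real (Suc n))" for n
      have "\<forall>n. \<exists>x y::'a. x \<in> unit_sphere \<and> y \<in> unit_sphere \<and> x \<noteq> y \<and> x \<noteq> - y \<and>
          (norm (x + y))\<^sup>2 \<ge> 4 - 16*\<eta> n \<and> (norm (x - y))\<^sup>2 \<ge> 4 - 16*\<eta> n"
      proof
        fix n
        have "\<eta> n > 0" by (simp add: \<eta>_def)
        then show "\<exists>x y::'a. x \<in> unit_sphere \<and> y \<in> unit_sphere \<and> x \<noteq> y \<and> x \<noteq> - y \<and>
          (norm (x + y))\<^sup>2 \<ge> 4 - 16*\<eta> n \<and> (norm (x - y))\<^sup>2 \<ge> 4 - 16*\<eta> n"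
          by (rule near)
      qed
      then obtain X Y :: "nat \<Rightarrow> 'a" where XY: "\<And>n. X n \<in> unit_sphere" "\<And>n. Y n \<in> unit_sphere"
        "\<And>n. (norm (X n + Y n))\<^sup>2 \<ge> 4 - 16*\<eta> n" "\<And>n. (norm (X n - Y n))\<^sup>2 \<ge> 4 - 16*\<eta> n"
        by metis
      have bX: "bounded (range X)" using XY(1) by (auto simp: bounded_iff unit_sphere_def)
      obtain r1 x0 where r1: "strict_mono r1" "(X \<circ> r1) \<longlonglongrightarrow> x0"
        using fd_subseq[OF B(1) _ bX] B(2) by auto
      have bY: "bounded (range (Y \<circ> r1))" using XY(2) by (auto simp: bounded_iff unit_sphere_def)
      obtain r2 y0 where r2: "strict_mono r2" "(Y \<circ> r1 \<circ> r2) \<longlonglongrightarrow> y0"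
        using fd_subseq[OF B(1) _ bY] B(2) by auto
      define r where "r = r1 \<circ> r2"
      have r: "strict_mono r" using r1(1) r2(1) by (simp add: r_def strict_mono_o)
      have Xr: "(\<lambda>n. X (r n)) \<longlonglongrightarrow> x0"
        using LIMSEQ_subseq_LIMSEQ[OF r1(2) r2(1)] by (simp add: r_def o_def)
      have Yr: "(\<lambda>n. Y (r n)) \<longlonglongrightarrow> y0" using r2(2) by (simp add: r_def o_def)
      have er: "(\<lambda>n. \<eta> (r n)) \<longlonglongrightarrow> 0"
        using LIMSEQ_subseq_LIMSEQ[OF LIMSEQ_inverse_real_of_nat r] by (simp add: \<eta>_def o_def)
      have lb: "(\<lambda>n. 4 - 16 * \<eta> (r n)) \<longlonglongrightarrow> 4 - 16 * 0"
        by (intro tendsto_intros er)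
      have nx0: "norm x0 = 1"
        using tendsto_norm[OF Xr] XY(1) LIMSEQ_unique[of "\<lambda>n. 1::real"] by (simp add: unit_sphere_def)
      have ny0: "norm y0 = 1"
        using tendsto_norm[OF Yr] XY(2) LIMSEQ_unique[of "\<lambda>n. 1::real"] by (simp add: unit_sphere_def)
      have A: "(norm (x0 + y0))\<^sup>2 \<ge> 4"
      proof (rule LIMSEQ_le[OF lb[simplified]])
        show "(\<lambda>n. (norm (X (r n) + Y (r n)))\<^sup>2) \<longlonglongrightarrow> (norm (x0 + y0))\<^sup>2"
          by (intro tendsto_intros Xr Yr)
        show "\<exists>N. \<forall>n\<ge>N. 4 - 16 * \<eta> (r n) \<le> (norm (X (r n) + Y (r n)))\<^sup>2" using XY(3) by blast
      qed
      have Bd: "(norm (x0 - y0))\<^sup>2 \<ge> 4"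
      proof (rule LIMSEQ_le[OF lb[simplified]])
        show "(\<lambda>n. (norm (X (r n) - Y (r n)))\<^sup>2) \<longlonglongrightarrow> (norm (x0 - y0))\<^sup>2"
          by (intro tendsto_intros Xr Yr)
        show "\<exists>N. \<forall>n\<ge>N. 4 - 16 * \<eta> (r n) \<le> (norm (X (r n) - Y (r n)))\<^sup>2" using XY(4) by blast
      qed
      have "x0 \<noteq> y0" using Bd by auto
      then have "norm (x0 + y0) < 2" using sc nx0 ny0
        by (auto simp: strictly_convex_space_def unit_sphere_def)
      then have "(norm (x0 + y0))\<^sup>2 < 2\<^sup>2" by (intro power_strict_mono) auto
      then show False using A by simp
    qed
  qed
qed

end
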